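(* For integers $m\geq 1$ and $n\geq 2$, let $T_n$ be any tree with $n$ vertices and let $\overline{K_m}$ be the edgeless graph on $m$ vertices. Then $m+1\leq \chi_L(T_n\odot \overline{K_m})\leq \chi_L(T_n)+m$.
   Context: All graphs are finite and simple. A $k$-coloring of a connected graph $G$ is a map $c:V(G)\to\{1,\dots,k\}$ with $c(u)\neq c(v)$ for adjacent $u,v$; it induces the partition $\Pi=\{C_1,\dots,C_k\}$ into color classes $C_i=c^{-1}(i)$. The color code of $v$ is $c_\Pi(v)=(d(v,C_1),\dots,d(v,C_k))$ with $d(v,C_i)=\min\{d(v,x): x\in C_i\}$ (graph distance). $c$ is a locating coloring if distinct vertices have distinct color codes; the locating-chromatic number $\chi_L(G)$ is the least $k$ for which a locating $k$-coloring exists. The corona product $G\odot H$ of a graph $G$ with vertex set $\{a_1,\dots,a_n\}$ and a graph $H$ is obtained from one copy of $G$ and $n$ disjoint copies of $H$ by joining $a_i$ to every vertex of the $i$-th copy of $H$. *)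

theory Defs
  imports Main "HOL-Library.Extended_Nat"
begin

definition simple_graph :: "'a set \<Rightarrow> ('a \<Rightarrow> 'a \<Rightarrow> bool) \<Rightarrow> bool" where
  "simple_graph V E \<longleftrightarrow> finite V \<and> (\<forall>u v. E u v \<longrightarrow> E v u) \<and> (\<forall>u. \<not> E u u)
     \<and> (\<forall>u v. E u v \<longrightarrow> u \<in> V \<and> v \<in> V)"

definition is_walk :: "'a set \<Rightarrow> ('a \<Rightarrow> 'a \<Rightarrow> bool) \<Rightarrow> 'a list \<Rightarrow> bool" where
  "is_walk V E xs \<longleftrightarrow> xs \<noteq> [] \<and> set xs \<subseteq> V \<and> (\<forall>i. Suc i < length xs \<longrightarrow> E (xs ! i) (xs ! Suc i))"

definition connected_graph :: "'a set \<Rightarrow> ('a \<Rightarrow> 'a \<Rightarrow> bool) \<Rightarrow> bool" where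
  "connected_graph V E \<longleftrightarrow> V \<noteq> {} \<and>
     (\<forall>u\<in>V. \<forall>v\<in>V. \<exists>xs. is_walk V E xs \<and> hd xs = u \<and> last xs = v)"

definition is_cycle :: "'a set \<Rightarrow> ('a \<Rightarrow> 'a \<Rightarrow> bool) \<Rightarrow> 'a list \<Rightarrow> bool" where
  "is_cycle V E xs \<longleftrightarrow> is_walk V E xs \<and> distinct xs \<and> length xs \<ge> 3 \<and> E (last xs) (hd xs)"

definition is_tree :: "'a set \<Rightarrow> ('a \<Rightarrow> 'a \<Rightarrow> bool) \<Rightarrow> bool" where
  "is_tree V E \<longleftrightarrow> simple_graph V E \<and> connected_graph V E \<and> (\<nexists>xs. is_cycle V E xs)"

text \<open>Graph distance (infinite if no walk exists).\<close>
definition gdist :: "'a set \<Rightarrow> ('a \<Rightarrow> 'a \<Rightarrow> bool) \<Rightarrow> 'a \<Rightarrow> 'a \<Rightarrow> enat" where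
  "gdist V E u v = (INF xs \<in> {xs. is_walk V E xs \<and> hd xs = u \<and> last xs = v}. enat (length xs - 1))"

definition setdist :: "'a set \<Rightarrow> ('a \<Rightarrow> 'a \<Rightarrow> bool) \<Rightarrow> 'a \<Rightarrow> 'a set \<Rightarrow> enat" where
  "setdist V E v C = (INF x \<in> C. gdist V E v x)"

definition color_class :: "'a set \<Rightarrow> ('a \<Rightarrow> nat) \<Rightarrow> nat \<Rightarrow> 'a set" where
  "color_class V c i = {x \<in> V. c x = i}"

definition proper_coloring :: "'a set \<Rightarrow> ('a \<Rightarrow> 'a \<Rightarrow> bool) \<Rightarrow> nat \<Rightarrow> ('a \<Rightarrow> nat) \<Rightarrow> bool" where
  "proper_coloring V E k c \<longleftrightarrow> (\<forall>v\<in>V. c v \<in> {1..k}) \<and> (\<forall>u\<in>V. \<forall>v\<in>V. E u v \<longrightarrow> c u \<noteq> c v)"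

definition color_code :: "'a set \<Rightarrow> ('a \<Rightarrow> 'a \<Rightarrow> bool) \<Rightarrow> nat \<Rightarrow> ('a \<Rightarrow> nat) \<Rightarrow> 'a \<Rightarrow> enat list" where
  "color_code V E k c v = map (\<lambda>i. setdist V E v (color_class V c i)) [1..<Suc k]"

definition locating_coloring :: "'a set \<Rightarrow> ('a \<Rightarrow> 'a \<Rightarrow> bool) \<Rightarrow> nat \<Rightarrow> ('a \<Rightarrow> nat) \<Rightarrow> bool" where
  "locating_coloring V E k c \<longleftrightarrow> proper_coloring V E k c \<and>
     (\<forall>u\<in>V. \<forall>v\<in>V. u \<noteq> v \<longrightarrow> color_code V E k c u \<noteq> color_code V E k c v)"

definition locating_chromatic_number :: "'a set \<Rightarrow> ('a \<Rightarrow> 'a \<Rightarrow> bool) \<Rightarrow> nat" where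
  "locating_chromatic_number V E = (LEAST k. \<exists>c. locating_coloring V E k c)"

text \<open>Corona product G \<odot> H: vertex Inl a is the copy of a in G, Inr (a,b) is vertex b
  of the copy of H attached to a.\<close>
definition corona_V :: "'a set \<Rightarrow> 'b set \<Rightarrow> ('a + 'a \<times> 'b) set" where
  "corona_V V W = Inl ` V \<union> Inr ` (V \<times> W)"

fun corona_E :: "('a \<Rightarrow> 'a \<Rightarrow> bool) \<Rightarrow> 'a set \<Rightarrow> ('b \<Rightarrow> 'b \<Rightarrow> bool) \<Rightarrow> 'b set
    \<Rightarrow> ('a + 'a \<times> 'b) \<Rightarrow> ('a + 'a \<times> 'b) \<Rightarrow> bool" where
  "corona_E E V F W (Inl a) (Inl a') = E a a'"
| "corona_E E V F W (Inr (a, b)) (Inr (a', b')) = (a = a' \<and> a \<in> V \<and> F b b')"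
| "corona_E E V F W (Inl a) (Inr (a', b)) = (a = a' \<and> a \<in> V \<and> b \<in> W)"
| "corona_E E V F W (Inr (a', b)) (Inl a) = (a = a' \<and> a \<in> V \<and> b \<in> W)"

definition edgeless_V :: "nat \<Rightarrow> nat set" where
  "edgeless_V m = {..<m}"

definition edgeless_E :: "nat \<Rightarrow> nat \<Rightarrow> bool" where
  "edgeless_E u v = False"

end

theory Submission
  imports Defs
begin

lemma enat_INF_attained:
  fixes f :: "'c \<Rightarrow> enat"
  assumes "A \<noteq> {}" shows "\<exists>x\<in>A. f x = (INF x\<in>A. f x)"
proof -
  have "f ` A \<noteq> {}" using assms by auto
  then have "Inf (f ` A) \<in> f ` A" unfolding Inf_enat_def by (auto intro: LeastI)
  then show ?thesis by auto
qed

lemma INF_plus1: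
  fixes f :: "'c \<Rightarrow> enat"
  shows "(INF x\<in>A. 1 + f x) = 1 + (INF x\<in>A. f x)"
proof (cases "A = {}")
  case True then show ?thesis by (simp add: top_enat_def)
next
  case False
  obtain x0 where x0: "x0 \<in> A" "f x0 = (INF x\<in>A. f x)" using enat_INF_attained[OF False, of f] by (elim bexE)
  show ?thesis
  proof (rule antisym)
    show "(INF x\<in>A. 1 + f x) \<le> 1 + (INF x\<in>A. f x)"
      using INF_lower[OF x0(1), of "\<lambda>x. 1 + f x"] x0(2) by simp
    show "1 + (INF x\<in>A. f x) \<le> (INF x\<in>A. 1 + f x)"
      by (rule INF_greatest) (intro add_left_mono INF_lower)
  qed
qed

lemma is_walk_Cons:
  "is_walk V E (x # ys) \<longleftrightarrow> x \<in> V \<and> (ys = [] \<or> (E x (hd ys) \<and> is_walk V E ys))"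
proof
  assume h: "is_walk V E (x # ys)"
  show "x \<in> V \<and> (ys = [] \<or> (E x (hd ys) \<and> is_walk V E ys))"
  proof (cases ys)
    case Nil then show ?thesis using h by (simp add: is_walk_def)
  next
    case (Cons z zs)
    have e0: "E x z" using h Cons unfolding is_walk_def by (metis length_Cons nth_Cons_0 nth_Cons_Suc zero_less_Suc Suc_less_eq)
    have "\<forall>i. Suc i < length ys \<longrightarrow> E (ys ! i) (ys ! Suc i)"
      using h unfolding is_walk_def by (metis Suc_less_eq length_Cons nth_Cons_Suc)
    then show ?thesis using h Cons e0 by (simp add: is_walk_def)
  qed
next
  assume h: "x \<in> V \<and> (ys = [] \<or> (E x (hd ys) \<and> is_walk V E ys))"
  show "is_walk V E (x # ys)"
  proof (cases ys)
    case Nil then show ?thesis using h by (simp add: is_walk_def)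
  next
    case (Cons z zs)
    have "\<forall>i. Suc i < length (x#ys) \<longrightarrow> E ((x#ys) ! i) ((x#ys) ! Suc i)"
    proof (intro allI impI)
      fix i assume "Suc i < length (x#ys)"
      then show "E ((x#ys) ! i) ((x#ys) ! Suc i)"
        using h Cons by (cases i) (auto simp: is_walk_def)
    qed
    then show ?thesis using h Cons by (auto simp: is_walk_def)
  qed
qed

lemma gdist_refl: "v \<in> V \<Longrightarrow> gdist V E v v = 0"
proof -
  assume "v \<in> V"
  then have "[v] \<in> {xs. is_walk V E xs \<and> hd xs = v \<and> last xs = v}" by (simp add: is_walk_def)
  then have "gdist V E v v \<le> enat (length [v] - 1)" unfolding gdist_def by (rule INF_lower)
  then show ?thesis by (simp add: zero_enat_def[symmetric])
qed

lemma gdist_zero: "gdist V E u x = 0 \<Longrightarrow> u = x"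
proof -
  assume h: "gdist V E u x = 0"
  let ?W = "{xs. is_walk V E xs \<and> hd xs = u \<and> last xs = x}"
  have "?W \<noteq> {}"
  proof
    assume "?W = {}"
    then have "gdist V E u x = Inf {}" unfolding gdist_def by (simp only: image_empty)
    then have "gdist V E u x = \<infinity>" by (simp add: top_enat_def)
    then show False using h by simp
  qed
  then obtain xs where xs: "xs \<in> ?W" "enat (length xs - 1) = gdist V E u x"
    unfolding gdist_def by (rule enat_INF_attained[THEN bexE])
  then have "length xs - 1 = 0" using h by (simp add: zero_enat_def)
  moreover have "xs \<noteq> []" using xs by (simp add: is_walk_def)
  ultimately obtain y where "xs = [y]" by (cases xs) auto
  then show ?thesis using xs by auto
qed

lemma setdist_zero: "setdist V E u S = 0 \<Longrightarrow> u \<in> S"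
proof -
  assume h: "setdist V E u S = 0"
  have "S \<noteq> {}"
  proof
    assume "S = {}"
    then have "setdist V E u S = \<infinity>" unfolding setdist_def by (simp add: top_enat_def)
    then show False using h by simp
  qed
  then obtain x where "x \<in> S" "gdist V E u x = setdist V E u S"
    unfolding setdist_def by (rule enat_INF_attained[THEN bexE])
  then have "gdist V E u x = 0" using h by simp
  then have "u = x" by (rule gdist_zero)
  then show ?thesis using \<open>x \<in> S\<close> by simp
qed

lemma setdist_self: "u \<in> S \<Longrightarrow> u \<in> V \<Longrightarrow> setdist V E u S = 0"
proof -
  assume "u \<in> S" "u \<in> V"
  have "setdist V E u S \<le> gdist V E u u" unfolding setdist_def using \<open>u \<in> S\<close> by (rule INF_lower)
  then show ?thesis using gdist_refl[OF \<open>u \<in> V\<close>] by simp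
qed

lemma code_eq_color:
  assumes "proper_coloring V E K c" "u \<in> V" "v \<in> V" "color_code V E K c u = color_code V E K c v"
  shows "c u = c v"
proof -
  have "c v \<in> set [1..<Suc K]" using assms(1,3) by (auto simp: proper_coloring_def)
  moreover have "\<forall>i\<in>set [1..<Suc K]. setdist V E u (color_class V c i) = setdist V E v (color_class V c i)"
    using assms(4) unfolding color_code_def map_eq_conv by blast
  ultimately have "setdist V E u (color_class V c (c v)) = setdist V E v (color_class V c (c v))"
    by blast
  also have "\<dots> = 0" using assms(3) by (intro setdist_self) (auto simp: color_class_def)
  finally have "u \<in> color_class V c (c v)" by (rule setdist_zero)
  then show ?thesis by (simp add: color_class_def)
qed

lemma code_diff:
  assumes "color_code V E K c u \<noteq> color_code V E K c v"
  shows "\<exists>i\<in>{1..K}. setdist V E u (color_class V c i) \<noteq> setdist V E v (color_class V c i)"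
  using assms unfolding color_code_def by (auto simp: map_eq_conv)

lemma walks_leaf:
  assumes "\<And>y. E' l y \<longleftrightarrow> y = p" "l \<in> V'" "x \<noteq> l"
  shows "{xs. is_walk V' E' xs \<and> hd xs = l \<and> last xs = x}
       = Cons l ` {ys. is_walk V' E' ys \<and> hd ys = p \<and> last ys = x}"
proof
  show "{xs. is_walk V' E' xs \<and> hd xs = l \<and> last xs = x}
       \<subseteq> Cons l ` {ys. is_walk V' E' ys \<and> hd ys = p \<and> last ys = x}"
  proof
    fix xs assume "xs \<in> {xs. is_walk V' E' xs \<and> hd xs = l \<and> last xs = x}"
    then have h: "is_walk V' E' xs" "hd xs = l" "last xs = x" by auto
    then obtain ys where xs: "xs = l # ys" by (cases xs) (auto simp: is_walk_def)
    have "ys \<noteq> []" using h xs assms(3) by auto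
    then show "xs \<in> Cons l ` {ys. is_walk V' E' ys \<and> hd ys = p \<and> last ys = x}"
      using h xs assms(1) is_walk_Cons[of V' E' l ys] by auto
  qed
next
  show "Cons l ` {ys. is_walk V' E' ys \<and> hd ys = p \<and> last ys = x}
      \<subseteq> {xs. is_walk V' E' xs \<and> hd xs = l \<and> last xs = x}"
    using assms(1,2) by (auto simp: is_walk_Cons) (auto simp: is_walk_def)
qed

lemma gdist_leaf:
  assumes "\<And>y. E' l y \<longleftrightarrow> y = p" "l \<in> V'" "x \<noteq> l"
  shows "gdist V' E' l x = 1 + gdist V' E' p x"
proof -
  let ?W = "{ys. is_walk V' E' ys \<and> hd ys = p \<and> last ys = x}"
  have "gdist V' E' l x = (INF ys\<in>?W. enat (length (l#ys) - 1))"
    unfolding gdist_def walks_leaf[where E'=E' and l=l and p=p, OF assms] by (simp add: image_image)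
  also have "\<dots> = (INF ys\<in>?W. 1 + enat (length ys - 1))"
  proof (rule INF_cong)
    fix ys assume "ys \<in> ?W"
    then have "ys \<noteq> []" by (auto simp: is_walk_def)
    then show "enat (length (l#ys) - 1) = 1 + enat (length ys - 1)"
      by (cases ys) (auto simp: one_enat_def)
  qed simp
  also have "\<dots> = 1 + gdist V' E' p x" unfolding gdist_def by (rule INF_plus1)
  finally show ?thesis .
qed

lemma setdist_leaf:
  assumes "\<And>y. E' l y \<longleftrightarrow> y = p" "l \<in> V'" "l \<notin> S"
  shows "setdist V' E' l S = 1 + setdist V' E' p S"
proof -
  have "setdist V' E' l S = (INF x\<in>S. 1 + gdist V' E' p x)"
    unfolding setdist_def
  proof (rule INF_cong)
    fix x assume "x \<in> S"
    then have "x \<noteq> l" using assms(3) by blast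
    then show "gdist V' E' l x = 1 + gdist V' E' p x"
      by (rule gdist_leaf[where E'=E' and l=l and p=p, OF assms(1) assms(2)])
  qed simp
  then show ?thesis unfolding setdist_def by (simp add: INF_plus1)
qed


definition proj :: "'a + 'a \<times> 'b \<Rightarrow> 'a" where
  "proj x = (case x of Inl a \<Rightarrow> a | Inr (a, b) \<Rightarrow> a)"

lemma corona_edge_proj:
  "corona_E E V F W x z \<Longrightarrow> proj x = proj z \<or> E (proj x) (proj z)"
  by (cases x; cases z) (auto simp: proj_def)

lemma corona_V_proj: "x \<in> corona_V V W \<Longrightarrow> proj x \<in> V"
  by (auto simp: corona_V_def proj_def)

lemma proj_walk:
  "is_walk (corona_V V W) (corona_E E V F W) xs \<Longrightarrow>
   \<exists>ys. is_walk V E ys \<and> hd ys = proj (hd xs) \<and> last ys = proj (last xs) \<and> length ys \<le> length xs"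
proof (induction xs)
  case Nil then show ?case by (simp add: is_walk_def)
next
  case (Cons x xs)
  show ?case
  proof (cases "xs = []")
    case True
    then show ?thesis using Cons.prems corona_V_proj[of x V W]
      by (intro exI[of _ "[proj x]"]) (auto simp: is_walk_Cons)
  next
    case False
    with Cons.prems have w: "x \<in> corona_V V W" "corona_E E V F W x (hd xs)"
      "is_walk (corona_V V W) (corona_E E V F W) xs" by (auto simp: is_walk_Cons)
    from Cons.IH[OF w(3)] obtain ys where ys: "is_walk V E ys" "hd ys = proj (hd xs)"
      "last ys = proj (last xs)" "length ys \<le> length xs" by blast
    have yne: "ys \<noteq> []" using ys by (auto simp: is_walk_def)
    show ?thesis
    proof (cases "proj x = proj (hd xs)")
      case True
      then show ?thesis using ys False by (intro exI[of _ ys]) auto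
    next
      case ne: False
      then have "E (proj x) (proj (hd xs))" using corona_edge_proj[OF w(2)] by blast
      then show ?thesis using ys False yne corona_V_proj[OF w(1)]
        by (intro exI[of _ "proj x # ys"]) (auto simp: is_walk_Cons)
    qed
  qed
qed

lemma Inl_walk:
  "is_walk V E ys \<Longrightarrow> is_walk (corona_V V W) (corona_E E V F W) (map Inl ys)"
proof (induction ys)
  case Nil then show ?case by (simp add: is_walk_def)
next
  case (Cons y ys)
  then show ?case by (cases ys) (auto simp: is_walk_Cons corona_V_def)
qed

lemma gdist_Inl:
  "gdist (corona_V V W) (corona_E E V F W) (Inl a) (Inl y) = gdist V E a y"
proof (rule antisym)
  show "gdist (corona_V V W) (corona_E E V F W) (Inl a) (Inl y) \<le> gdist V E a y"
    unfolding gdist_def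
  proof (rule INF_mono)
    fix ys assume "ys \<in> {xs. is_walk V E xs \<and> hd xs = a \<and> last xs = y}"
    then have h: "is_walk V E ys" "hd ys = a" "last ys = y" "ys \<noteq> []" by (auto simp: is_walk_def)
    then show "\<exists>xs\<in>{xs. is_walk (corona_V V W) (corona_E E V F W) xs \<and> hd xs = Inl a \<and> last xs = Inl y}.
          enat (length xs - 1) \<le> enat (length ys - 1)"
      using Inl_walk[OF h(1), of W F] by (intro bexI[of _ "map Inl ys"]) (auto simp: hd_map last_map)
  qed
  show "gdist V E a y \<le> gdist (corona_V V W) (corona_E E V F W) (Inl a) (Inl y)"
    unfolding gdist_def
  proof (rule INF_mono)
    fix xs assume "xs \<in> {xs. is_walk (corona_V V W) (corona_E E V F W) xs \<and> hd xs = Inl a \<and> last xs = Inl y}"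
    then have h: "is_walk (corona_V V W) (corona_E E V F W) xs" "hd xs = Inl a" "last xs = Inl y" by auto
    from proj_walk[OF h(1)] obtain ys where "is_walk V E ys" "hd ys = proj (hd xs)"
      "last ys = proj (last xs)" "length ys \<le> length xs" by blast
    then show "\<exists>ys\<in>{xs. is_walk V E xs \<and> hd xs = a \<and> last xs = y}.
          enat (length ys - 1) \<le> enat (length xs - 1)"
      using h by (intro bexI[of _ ys]) (auto simp: proj_def)
  qed
qed

lemma setdist_Inl:
  "setdist (corona_V V W) (corona_E E V F W) (Inl a) (Inl ` C) = setdist V E a C"
  unfolding setdist_def by (simp add: image_image gdist_Inl)

lemma corona_leaf_nbr:
  assumes "a \<in> V" "b \<in> W" "\<And>x y. \<not> F x y"
  shows "corona_E E V F W (Inr (a, b)) y \<longleftrightarrow> y = Inl a"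
  using assms by (cases y) auto


lemma enat_plus1_cancel: "(1::enat) + x = 1 + y \<Longrightarrow> x = y"
  by (cases x; cases y) (auto simp: one_enat_def)

lemma code_eq_at:
  "color_code V E K c u = color_code V E K c v \<Longrightarrow> i \<in> {1..K} \<Longrightarrow>
   setdist V E u (color_class V c i) = setdist V E v (color_class V c i)"
proof -
  assume h: "color_code V E K c u = color_code V E K c v" "i \<in> {1..K}"
  then have "i \<in> set [1..<Suc K]" by auto
  with h(1) show ?thesis unfolding color_code_def map_eq_conv by blast
qed

lemma exists_locating:
  assumes "finite V" "\<And>u. \<not> E u u"
  shows "\<exists>k c. locating_coloring V E k c"
proof -
  obtain h where h: "bij_betw h V {0..<card V}" using ex_bij_betw_finite_nat[OF assms(1)] by blast
  define c where "c = (\<lambda>v. Suc (h v))"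
  have inj: "inj_on c V" using h unfolding c_def bij_betw_def inj_on_def by auto
  have pc: "proper_coloring V E (card V) c"
    unfolding proper_coloring_def
  proof (intro conjI ballI impI)
    fix v assume "v \<in> V"
    then have "h v < card V" using h by (auto simp: bij_betw_def)
    then show "c v \<in> {1..card V}" by (simp add: c_def)
  next
    fix u v assume "u \<in> V" "v \<in> V" "E u v"
    then have "u \<noteq> v" using assms(2) by blast
    then show "c u \<noteq> c v" using inj \<open>u \<in> V\<close> \<open>v \<in> V\<close> by (auto simp: inj_on_def)
  qed
  have "locating_coloring V E (card V) c"
    unfolding locating_coloring_def
  proof (intro conjI pc ballI impI)
    fix u v assume uv: "u \<in> V" "v \<in> V" "u \<noteq> v"
    show "color_code V E (card V) c u \<noteq> color_code V E (card V) c v"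
    proof
      assume "color_code V E (card V) c u = color_code V E (card V) c v"
      then have "c u = c v" using code_eq_color[OF pc uv(1,2)] by blast
      then show False using inj uv by (auto simp: inj_on_def)
    qed
  qed
  then show ?thesis by blast
qed

lemma corona_upper:
  assumes loc: "locating_coloring V E k c"
  defines "c' \<equiv> (\<lambda>x. case x of Inl a \<Rightarrow> c a | Inr (a, b) \<Rightarrow> k + 1 + (b::nat))"
  shows "locating_coloring (corona_V V {..<m}) (corona_E E V edgeless_E {..<m}) (k + m) c'"
proof -
  let ?CV = "corona_V V {..<m}" and ?CE = "corona_E E V edgeless_E {..<m}"
  have pcT: "proper_coloring V E k c" using loc by (simp add: locating_coloring_def)
  have cT: "\<And>a. a \<in> V \<Longrightarrow> c a \<in> {1..k}" using pcT by (simp add: proper_coloring_def)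
  have cls: "color_class ?CV c' i = Inl ` color_class V c i" if "i \<in> {1..k}" for i
    using that by (auto simp: color_class_def corona_V_def c'_def)
  have nbr: "\<And>a b y. a \<in> V \<Longrightarrow> b < m \<Longrightarrow> ?CE (Inr (a, b)) y \<longleftrightarrow> y = Inl a"
    by (rule corona_leaf_nbr) (auto simp: edgeless_E_def)
  have leafd: "setdist ?CV ?CE (Inr (a, b)) (color_class ?CV c' i) = 1 + setdist V E a (color_class V c i)"
    if "a \<in> V" "b < m" "i \<in> {1..k}" for a b i
  proof -
    have "setdist ?CV ?CE (Inr (a, b)) (Inl ` color_class V c i)
        = 1 + setdist ?CV ?CE (Inl a) (Inl ` color_class V c i)"
      by (rule setdist_leaf[where E'="?CE" and l="Inr (a,b)" and p="Inl a"])
        (use that nbr in \<open>auto simp: corona_V_def\<close>)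
    then show ?thesis using cls[OF that(3)] setdist_Inl by metis
  qed
  have pc: "proper_coloring ?CV ?CE (k + m) c'"
    unfolding proper_coloring_def
  proof (intro conjI ballI impI)
    fix v assume "v \<in> ?CV"
    then show "c' v \<in> {1..k + m}" by (auto simp: corona_V_def c'_def dest!: cT)
  next
    fix u v assume uv: "u \<in> ?CV" "v \<in> ?CV" "?CE u v"
    show "c' u \<noteq> c' v"
    proof (cases u)
      case (Inl a)
      show ?thesis
      proof (cases v)
        case (Inl a')
        then show ?thesis using uv \<open>u = Inl a\<close> pcT by (auto simp: c'_def proper_coloring_def corona_V_def)
      next
        case (Inr p)
        then show ?thesis using uv \<open>u = Inl a\<close> by (cases p) (auto simp: c'_def corona_V_def dest!: cT)
      qed
    next
      case (Inr p)
      show ?thesis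
      proof (cases v)
        case (Inl a')
        then show ?thesis using uv \<open>u = Inr p\<close> by (cases p) (auto simp: c'_def corona_V_def dest!: cT)
      next
        case (Inr q)
        then show ?thesis using uv \<open>u = Inr p\<close> by (cases p; cases q) (auto simp: edgeless_E_def)
      qed
    qed
  qed
  show ?thesis
    unfolding locating_coloring_def
  proof (intro conjI pc ballI impI)
    fix u v assume uv: "u \<in> ?CV" "v \<in> ?CV" "u \<noteq> v"
    show "color_code ?CV ?CE (k + m) c' u \<noteq> color_code ?CV ?CE (k + m) c' v"
    proof
      assume eq: "color_code ?CV ?CE (k + m) c' u = color_code ?CV ?CE (k + m) c' v"
      have col: "c' u = c' v" using code_eq_color[OF pc uv(1,2) eq] .
      have ati: "\<And>i. i \<in> {1..k} \<Longrightarrow> setdist ?CV ?CE u (color_class ?CV c' i) = setdist ?CV ?CE v (color_class ?CV c' i)"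
        using code_eq_at[OF eq] by auto
      show False
      proof (cases u)
        case (Inl a)
        show False
        proof (cases v)
          case (Inl a')
          with uv \<open>u = Inl a\<close> have aa: "a \<in> V" "a' \<in> V" "a \<noteq> a'" by (auto simp: corona_V_def)
          then have "color_code V E k c a \<noteq> color_code V E k c a'" using loc by (simp add: locating_coloring_def)
          then obtain i where i: "i \<in> {1..k}" "setdist V E a (color_class V c i) \<noteq> setdist V E a' (color_class V c i)"
            by (blast dest: code_diff)
          have "setdist ?CV ?CE (Inl a) (color_class ?CV c' i) = setdist ?CV ?CE (Inl a') (color_class ?CV c' i)"
            using ati[OF i(1)] \<open>u = Inl a\<close> \<open>v = Inl a'\<close> by simp
          then show False using i cls[OF i(1)] setdist_Inl by metis
        next
          case (Inr p)
          then show False using uv col \<open>u = Inl a\<close> by (cases p) (auto simp: c'_def corona_V_def dest!: cT)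
        qed
      next
        case (Inr p)
        obtain a b where p: "p = (a, b)" by (cases p)
        show False
        proof (cases v)
          case (Inl a')
          then show False using uv col \<open>u = Inr p\<close> p by (auto simp: c'_def corona_V_def dest!: cT)
        next
          case (Inr q)
          obtain a' b' where q: "q = (a', b')" by (cases q)
          have bb: "b = b'" using col \<open>u = Inr p\<close> \<open>v = Inr q\<close> p q by (simp add: c'_def)
          have aa: "a \<in> V" "a' \<in> V" "b < m" "a \<noteq> a'"
            using uv \<open>u = Inr p\<close> \<open>v = Inr q\<close> p q bb by (auto simp: corona_V_def)
          then have "color_code V E k c a \<noteq> color_code V E k c a'" using loc by (simp add: locating_coloring_def)
          then obtain i where i: "i \<in> {1..k}" "setdist V E a (color_class V c i) \<noteq> setdist V E a' (color_class V c i)"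
            by (blast dest: code_diff)
          have "1 + setdist V E a (color_class V c i) = 1 + setdist V E a' (color_class V c i)"
            using ati[OF i(1)] \<open>u = Inr p\<close> \<open>v = Inr q\<close> p q bb leafd[OF aa(1) aa(3) i(1)] leafd[OF aa(2) aa(3) i(1)]
            by (simp add: bb)
          then show False using i(2) enat_plus1_cancel by blast
        qed
      qed
    qed
  qed
qed

lemma corona_lower:
  assumes loc: "locating_coloring (corona_V V {..<m}) (corona_E E V edgeless_E {..<m}) K c"
    and a0: "a0 \<in> V"
  shows "m + 1 \<le> K"
proof -
  let ?CV = "corona_V V {..<m}" and ?CE = "corona_E E V edgeless_E {..<m}"
  have pc: "proper_coloring ?CV ?CE K c" using loc by (simp add: locating_coloring_def)
  have nbr: "\<And>b y. b < m \<Longrightarrow> ?CE (Inr (a0, b)) y \<longleftrightarrow> y = Inl a0"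
    by (rule corona_leaf_nbr) (auto simp: edgeless_E_def a0)
  have inj: "inj_on (\<lambda>b. c (Inr (a0, b))) {..<m}"
  proof (rule inj_onI, rule ccontr)
    fix b b' assume bb: "b \<in> {..<m}" "b' \<in> {..<m}" "c (Inr (a0, b)) = c (Inr (a0, b'))" "b \<noteq> b'"
    have mem: "Inr (a0, b) \<in> ?CV" "Inr (a0, b') \<in> ?CV" using bb a0 by (auto simp: corona_V_def)
    have "color_code ?CV ?CE K c (Inr (a0, b)) = color_code ?CV ?CE K c (Inr (a0, b'))"
      unfolding color_code_def
    proof (rule map_cong[OF refl])
      fix i
      let ?C = "color_class ?CV c i"
      show "setdist ?CV ?CE (Inr (a0, b)) ?C = setdist ?CV ?CE (Inr (a0, b')) ?C"
      proof (cases "Inr (a0, b) \<in> ?C")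
        case True
        then have "Inr (a0, b') \<in> ?C" using bb mem by (auto simp: color_class_def)
        then show ?thesis using True mem setdist_self by metis
      next
        case False
        then have F2: "Inr (a0, b') \<notin> ?C" using bb mem by (auto simp: color_class_def)
        have "setdist ?CV ?CE (Inr (a0, b)) ?C = 1 + setdist ?CV ?CE (Inl a0) ?C"
          by (rule setdist_leaf[where E'="?CE" and l="Inr (a0,b)" and p="Inl a0"])
            (use False mem nbr bb in auto)
        moreover have "setdist ?CV ?CE (Inr (a0, b')) ?C = 1 + setdist ?CV ?CE (Inl a0) ?C"
          by (rule setdist_leaf[where E'="?CE" and l="Inr (a0,b')" and p="Inl a0"])
            (use F2 mem nbr bb in auto)
        ultimately show ?thesis by simp
      qed
    qed
    then show False using loc mem bb(4) by (auto simp: locating_coloring_def)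
  qed
  have notin: "c (Inl a0) \<notin> (\<lambda>b. c (Inr (a0, b))) ` {..<m}"
  proof
    assume "c (Inl a0) \<in> (\<lambda>b. c (Inr (a0, b))) ` {..<m}"
    then obtain b where b: "b < m" "c (Inl a0) = c (Inr (a0, b))" by auto
    have "?CE (Inl a0) (Inr (a0, b))" using a0 b by simp
    moreover have "Inl a0 \<in> ?CV" "Inr (a0, b) \<in> ?CV" using a0 b by (auto simp: corona_V_def)
    ultimately show False using pc b by (auto simp: proper_coloring_def)
  qed
  let ?S = "insert (c (Inl a0)) ((\<lambda>b. c (Inr (a0, b))) ` {..<m})"
  have "card ?S = m + 1" using notin card_image[OF inj] by (simp add: card_insert_disjoint)
  moreover have "?S \<subseteq> {1..K}" using pc a0 by (auto simp: proper_coloring_def corona_V_def)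
  ultimately show ?thesis by (metis card_atLeastAtMost card_mono finite_atLeastAtMost diff_Suc_1)
qed

theorem theorem5:
  fixes V :: "'a set" and E :: "'a \<Rightarrow> 'a \<Rightarrow> bool" and m n :: nat
  assumes "m \<ge> 1" and "n \<ge> 2"
    and "is_tree V E" and "card V = n"
  shows "m + 1 \<le> locating_chromatic_number (corona_V V (edgeless_V m))
                    (corona_E E V edgeless_E (edgeless_V m))
       \<and> locating_chromatic_number (corona_V V (edgeless_V m))
                    (corona_E E V edgeless_E (edgeless_V m))
           \<le> locating_chromatic_number V E + m"
proof -
  have sg: "simple_graph V E" using assms(3) by (simp add: is_tree_def)
  then have fin: "finite V" and irr: "\<And>u. \<not> E u u" by (auto simp: simple_graph_def)
  have "V \<noteq> {}" using assms(2,4) by auto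
  then obtain a0 where a0: "a0 \<in> V" by blast
  from exists_locating[of V E, OF fin irr] obtain k0 c0 where "locating_coloring V E k0 c0" by (elim exE)
  then have "\<exists>c. locating_coloring V E (locating_chromatic_number V E) c"
    unfolding locating_chromatic_number_def
    by (intro LeastI[where P="\<lambda>k. \<exists>c. locating_coloring V E k c" and k=k0]) blast
  then obtain cT where cT: "locating_coloring V E (locating_chromatic_number V E) cT" by blast
  have ex: "\<exists>c. locating_coloring (corona_V V {..<m}) (corona_E E V edgeless_E {..<m})
                 (locating_chromatic_number V E + m) c"
    using corona_upper[OF cT] by blast
  have up: "locating_chromatic_number (corona_V V {..<m}) (corona_E E V edgeless_E {..<m})
           \<le> locating_chromatic_number V E + m"
    unfolding locating_chromatic_number_def[of "corona_V V {..<m}"] by (rule Least_le[where P="\<lambda>k. \<exists>c. locating_coloring (corona_V V {..<m}) (corona_E E V edgeless_E {..<m}) k c"]) (rule ex)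
  have "\<exists>c. locating_coloring (corona_V V {..<m}) (corona_E E V edgeless_E {..<m})
         (locating_chromatic_number (corona_V V {..<m}) (corona_E E V edgeless_E {..<m})) c"
    unfolding locating_chromatic_number_def[of "corona_V V {..<m}"] by (rule LeastI[where P="\<lambda>k. \<exists>c. locating_coloring (corona_V V {..<m}) (corona_E E V edgeless_E {..<m}) k c"]) (rule ex)
  then obtain cc where "locating_coloring (corona_V V {..<m}) (corona_E E V edgeless_E {..<m})
         (locating_chromatic_number (corona_V V {..<m}) (corona_E E V edgeless_E {..<m})) cc" by blast
  from corona_lower[OF this a0] up show ?thesis by (simp add: edgeless_V_def)
qed

end
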